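(* Let $G_1$ be the graph constructed as follows: take a star with centre $c$ and leaves $v_1,v_2,v_3,v_4$, and for each $i\in\{1,2,3,4\}$ take a copy $S_i$ of $S$ in which the vertex $a$ is identified with $c$ and the vertex $b$ is identified with $v_i$ (so the edge $ab$ of $S_i$ is the edge $cv_i$), the copies $S_1,\dots,S_4$ being otherwise vertex-disjoint. Then for every subgraph $H$ of $G_1$ with maximum degree $\Delta(H)\le 3$, the graph $G_1-E(H)$ is not $3$-choosable.
   Context: $J_3$ is the graph with vertex set $\{a,b,c,d,e,f,g,h,i,j,k\}$ and edges $ab$; $ac,ad,ae,af,ag$; $bc,bd,be,bf,bg$; $cd,de,ef,fg$; $ha,hd,he$; $ia,ie,if$; $jb,jd,je$; $kb,ke,kf$. $S$ is the graph obtained from nine pairwise vertex-disjoint copies of $J_3$ by identifying all copies of $a$ into a single vertex $a$ and all copies of $b$ into a single vertex $b$, all other vertices staying distinct. A graph is $3$-choosable if for every assignment of a list of $3$ colours to each vertex there is a proper colouring choosing each vertex's colour from its list. (The resulting graph $G_1$ is planar.) *)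

theory Defs
  imports Main
begin

definition choosable :: "nat \<Rightarrow> 'v set \<Rightarrow> 'v set set \<Rightarrow> bool" where
  "choosable k V E \<longleftrightarrow>
     (\<forall>L :: 'v \<Rightarrow> nat set. (\<forall>v\<in>V. finite (L v) \<and> card (L v) = k) \<longrightarrow>
        (\<exists>col. (\<forall>v\<in>V. col v \<in> L v) \<and> (\<forall>u v. {u, v} \<in> E \<and> u \<noteq> v \<longrightarrow> col u \<noteq> col v)))"

definition is_subgraph :: "'v set \<Rightarrow> 'v set set \<Rightarrow> 'v set \<Rightarrow> 'v set set \<Rightarrow> bool" where
  "is_subgraph VH EH V E \<longleftrightarrow> VH \<subseteq> V \<and> EH \<subseteq> E \<and> (\<forall>e\<in>EH. e \<subseteq> VH)"

definition degree :: "'v set set \<Rightarrow> 'v \<Rightarrow> nat" where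
  "degree E v = card {e\<in>E. v \<in> e}"

definition max_degree_le :: "'v set \<Rightarrow> 'v set set \<Rightarrow> nat \<Rightarrow> bool" where
  "max_degree_le V E d \<longleftrightarrow> (\<forall>v\<in>V. degree E v \<le> d)"

datatype jv = A | B | C | D | E | F | G | H | I | J | K

definition J3_edges :: "(jv \<times> jv) list" where
  "J3_edges =
    [(A,B),
     (A,C),(A,D),(A,E),(A,F),(A,G),
     (B,C),(B,D),(B,E),(B,F),(B,G),
     (C,D),(D,E),(E,F),(F,G),
     (H,A),(H,D),(H,E),
     (I,A),(I,E),(I,F),
     (J,B),(J,D),(J,E),
     (K,B),(K,E),(K,F)]"

text \<open>Vertices: the centre c, leaves v_i (i < 4), and for each i < 4 and each
  copy j < 9 of J_3 inside S_i, the non-a, non-b vertices of that copy.\<close>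

datatype gv = Cen | Leaf nat | Inner nat nat jv

fun emb :: "nat \<Rightarrow> nat \<Rightarrow> jv \<Rightarrow> gv" where
  "emb i j A = Cen"
| "emb i j B = Leaf i"
| "emb i j x = Inner i j x"

definition G1_V :: "gv set" where
  "G1_V = {Cen} \<union> {Leaf i | i. i < 4} \<union> {Inner i j x | i j x. i < 4 \<and> j < 9 \<and> x \<notin> {A, B}}"

definition G1_E :: "gv set set" where
  "G1_E = {{Cen, Leaf i} | i. i < 4}
        \<union> {{emb i j x, emb i j y} | i j x y. i < 4 \<and> j < 9 \<and> (x, y) \<in> set J3_edges}"

end

theory Submission
  imports Defs
begin

definition gl :: "bool \<Rightarrow> nat \<Rightarrow> nat \<Rightarrow> jv \<Rightarrow> nat set" where
"gl X p q x = (case x of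
   A \<Rightarrow> {1,2,3} | B \<Rightarrow> {1,2,3}
 | C \<Rightarrow> {p,q,4} | D \<Rightarrow> {p,q,4} | E \<Rightarrow> (if X then {p,q,4} else {p,q,5})
 | F \<Rightarrow> (if X then {p,q,4} else {p,q,6}) | G \<Rightarrow> {p,q,4}
 | H \<Rightarrow> {p,4,5} | I \<Rightarrow> {p,5,6} | J \<Rightarrow> {q,4,5} | K \<Rightarrow> {q,5,6})"

lemma gl_card: "p \<noteq> q \<Longrightarrow> p \<in> {1,2,3} \<Longrightarrow> q \<in> {1,2,3} \<Longrightarrow> card (gl X p q x) = 3"
  by (cases x) (auto simp: gl_def)

lemma gadget:
  fixes col :: "jv \<Rightarrow> nat" and rm :: "jv \<Rightarrow> jv \<Rightarrow> bool"
  assumes ab: "col A \<noteq> col B" "col A \<in> {1,2,3}" "col B \<in> {1,2,3}"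
    and X: "X = (\<not> rm C D \<or> \<not> rm D E \<or> \<not> rm E F \<or> \<not> rm F G)"
    and lists: "\<forall>x. x \<noteq> A \<and> x \<noteq> B \<longrightarrow> col x \<in> gl X (col A) (col B) x"
    and prp: "\<forall>(x,y)\<in>set J3_edges. x = A \<or> x = B \<or> y = A \<or> y = B \<or> \<not> rm x y \<longrightarrow> col x \<noteq> col y"
    and dd: "\<not>(rm C D \<and> rm D E \<and> rm H D \<and> rm J D)"
    and df: "\<not>(rm E F \<and> rm F G \<and> rm I F \<and> rm K F)"
    and de1: "\<not>(rm D E \<and> rm E F \<and> rm H E \<and> rm I E)"
    and de2: "\<not>(rm D E \<and> rm E F \<and> rm H E \<and> rm J E)"
    and de3: "\<not>(rm D E \<and> rm E F \<and> rm H E \<and> rm K E)"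
    and de4: "\<not>(rm D E \<and> rm E F \<and> rm I E \<and> rm J E)"
    and de5: "\<not>(rm D E \<and> rm E F \<and> rm I E \<and> rm K E)"
    and de6: "\<not>(rm D E \<and> rm E F \<and> rm J E \<and> rm K E)"
  shows False
proof -
  have P: "\<And>x y. (x,y) \<in> set J3_edges \<Longrightarrow> x = A \<or> x = B \<or> y = A \<or> y = B \<or> \<not> rm x y \<Longrightarrow> col x \<noteq> col y"
    using prp by blast
  have Lx: "\<And>x. x \<noteq> A \<Longrightarrow> x \<noteq> B \<Longrightarrow> col x \<in> gl X (col A) (col B) x" using lists by blast
  have cC: "col C = 4" using Lx[of C] P[of A C] P[of B C] by (auto simp: gl_def J3_edges_def)
  have cD: "col D = 4" using Lx[of D] P[of A D] P[of B D] by (auto simp: gl_def J3_edges_def)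
  have cG: "col G = 4" using Lx[of G] P[of A G] P[of B G] by (auto simp: gl_def J3_edges_def)
  have cE: "col E = (if X then 4 else 5)" using Lx[of E] P[of A E] P[of B E] by (auto simp: gl_def J3_edges_def split: if_splits)
  have cF: "col F = (if X then 4 else 6)" using Lx[of F] P[of A F] P[of B F] by (auto simp: gl_def J3_edges_def split: if_splits)
  show False
  proof (cases X)
    case True
    then show ?thesis using X cC cD cE cF cG P[of C D] P[of D E] P[of E F] P[of F G]
      by (auto simp: J3_edges_def)
  next
    case False
    then have rmd: "rm C D" "rm D E" "rm E F" "rm F G" using X by auto
    have h: "rm H D \<or> rm H E"
      using Lx[of H] P[of H A] P[of H D] P[of H E] False cD cE ab by (auto simp: gl_def J3_edges_def)
    have i: "rm I E \<or> rm I F"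
      using Lx[of I] P[of I A] P[of I E] P[of I F] False cF cE ab by (auto simp: gl_def J3_edges_def)
    have j: "rm J D \<or> rm J E"
      using Lx[of J] P[of J B] P[of J D] P[of J E] False cD cE ab by (auto simp: gl_def J3_edges_def)
    have k: "rm K E \<or> rm K F"
      using Lx[of K] P[of K B] P[of K E] P[of K F] False cF cE ab by (auto simp: gl_def J3_edges_def)
    show ?thesis using h i j k rmd dd df de1 de2 de3 de4 de5 de6 by blast
  qed
qed

lemma fin_G1E: "finite G1_E"
proof -
  have "G1_E \<subseteq> (\<lambda>i. {Cen, Leaf i}) ` {..<4} \<union>
     (\<lambda>(i,j,x,y). {emb i j x, emb i j y}) ` ({..<4} \<times> {..<9} \<times> set J3_edges)"
    unfolding G1_E_def by (auto intro: rev_image_eqI)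
  moreover have "finite ((\<lambda>i. {Cen, Leaf i}) ` {..<4} \<union>
     (\<lambda>(i,j,x,y). {emb i j x, emb i j y}) ` ({..<4} \<times> {..<9} \<times> set J3_edges))"
    by auto
  ultimately show ?thesis by (rule finite_subset)
qed

lemma star_card:
  assumes sub: "is_subgraph VH EH G1_V G1_E" and md: "max_degree_le VH EH 3"
    and inj: "inj_on g S" and img: "g ` S \<subseteq> {e\<in>EH. v \<in> e}"
  shows "card S \<le> 3"
proof (cases "S = {}")
  case True then show ?thesis by simp
next
  case False
  then obtain s where "s \<in> S" by blast
  then have "g s \<in> EH" "v \<in> g s" using img by auto
  then have vV: "v \<in> VH" using sub by (auto simp: is_subgraph_def)
  have finE: "finite EH" using sub fin_G1E by (auto simp: is_subgraph_def intro: finite_subset)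
  have "card S \<le> card {e\<in>EH. v \<in> e}"
    by (rule card_inj_on_le[OF inj img]) (use finE in auto)
  also have "\<dots> \<le> 3" using md vV by (auto simp: max_degree_le_def degree_def)
  finally show ?thesis .
qed

lemma deg4:
  assumes sub: "is_subgraph VH EH G1_V G1_E" and md: "max_degree_le VH EH 3"
    and "e1 \<in> EH" "e2 \<in> EH" "e3 \<in> EH" "e4 \<in> EH"
    and "v \<in> e1" "v \<in> e2" "v \<in> e3" "v \<in> e4"
    and "distinct [e1,e2,e3,e4]"
  shows False
proof -
  have "card {0::nat,1,2,3} \<le> 3"
    by (rule star_card[OF sub md, of "\<lambda>n. [e1,e2,e3,e4] ! n" _ v])
       (use assms in \<open>auto simp: inj_on_def less_Suc_eq\<close>)
  then show False by simp
qed

definition pl :: "(nat \<times> nat) list" where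
  "pl = [(1,2),(1,3),(2,1),(2,3),(3,1),(3,2)]"

lemma pl_ok: "k < 6 \<Longrightarrow> fst (pl!k) \<noteq> snd (pl!k) \<and> fst (pl!k) \<in> {1,2,3} \<and> snd (pl!k) \<in> {1,2,3}"
proof -
  assume "k < 6"
  then have "pl ! k \<in> set pl" by (intro nth_mem) (simp add: pl_def)
  then show ?thesis by (auto simp: pl_def)
qed

lemma pl_cover: "p \<noteq> q \<Longrightarrow> p \<in> {1,2,3} \<Longrightarrow> q \<in> {1,2,3} \<Longrightarrow> \<exists>k<6. pl ! k = (p,q)"
proof -
  assume "p \<noteq> q" "p \<in> {1,2,3}" "q \<in> {1,2,3}"
  then have "(p,q) \<in> set pl" by (auto simp: pl_def)
  then obtain k where "k < length pl" "pl!k = (p,q)" by (auto simp: in_set_conv_nth)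
  moreover have "length pl = 6" by (simp add: pl_def)
  ultimately show ?thesis by auto
qed

lemma gl_fin: "finite (gl X p q x)"
  by (cases x) (auto simp: gl_def)

lemma emb_inj: "emb i j x = emb i j y \<Longrightarrow> x = y"
  by (cases x; cases y; simp)

lemma J3_ne: "(x,y) \<in> set J3_edges \<Longrightarrow> x \<noteq> y"
  by (auto simp: J3_edges_def)

theorem theorem5:
  fixes VH :: "gv set" and EH :: "gv set set"
  assumes "is_subgraph VH EH G1_V G1_E"
    and "max_degree_le VH EH 3"
  shows "\<not> choosable 3 G1_V (G1_E - EH)"
proof -
  note sub = assms(1) and md = assms(2)
  define PI where "PI i e \<longleftrightarrow> e \<in> EH \<and> Cen \<in> e \<and> (e = {Cen, Leaf i} \<or> (\<exists>j x. e = {Cen, Inner i j x}))" for i e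
  define badI where "badI = {i. i < (4::nat) \<and> (\<exists>e. PI i e)}"
  define gI where "gI i = (SOME e. PI i e)" for i
  have gI: "PI i (gI i)" if "i \<in> badI" for i
    using that unfolding badI_def gI_def by (auto intro: someI_ex)
  have "inj_on gI badI"
  proof (rule inj_onI)
    fix i i' assume "i \<in> badI" "i' \<in> badI" "gI i = gI i'"
    then have "PI i (gI i)" "PI i' (gI i)" using gI by metis+
    then show "i = i'" unfolding PI_def by (auto simp: doubleton_eq_iff)
  qed
  moreover have "gI ` badI \<subseteq> {e\<in>EH. Cen \<in> e}" using gI unfolding PI_def by auto
  ultimately have cbI: "card badI \<le> 3" by (rule star_card[OF sub md])
  have "\<not> {..<4::nat} \<subseteq> badI"
  proof
    assume "{..<4} \<subseteq> badI"
    moreover have "finite badI" unfolding badI_def by auto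
    ultimately have "card {..<4::nat} \<le> card badI" by (rule card_mono[rotated])
    with cbI show False by simp
  qed
  then obtain i where i: "i < 4" "i \<notin> badI" by auto
  have nAB: "{Cen, Leaf i} \<notin> EH" "{Leaf i, Cen} \<notin> EH"
    and nA: "\<And>j x. {Cen, Inner i j x} \<notin> EH" "\<And>j x. {Inner i j x, Cen} \<notin> EH"
    using i unfolding badI_def PI_def by (auto simp: insert_commute)
  define PJ where "PJ j x \<longleftrightarrow> {Leaf i, Inner i j x} \<in> EH" for j x
  define badJ where "badJ = {j. j < (9::nat) \<and> (\<exists>x. PJ j x)}"
  define gJ where "gJ j = {Leaf i, Inner i j (SOME x. PJ j x)}" for j
  have gJ: "gJ j \<in> EH" if "j \<in> badJ" for j
  proof -
    from that obtain x where "PJ j x" unfolding badJ_def by auto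
    then have "PJ j (SOME x. PJ j x)" by (rule someI)
    then show ?thesis unfolding gJ_def PJ_def .
  qed
  have "inj_on gJ badJ" by (auto simp: inj_on_def gJ_def doubleton_eq_iff)
  moreover have "gJ ` badJ \<subseteq> {e\<in>EH. Leaf i \<in> e}" using gJ by (auto simp: gJ_def)
  ultimately have cbJ: "card badJ \<le> 3" by (rule star_card[OF sub md])
  define good where "good = {..<9::nat} - badJ"
  have bJs: "badJ \<subseteq> {..<9}" unfolding badJ_def by auto
  have "card good = 9 - card badJ" unfolding good_def
    using card_Diff_subset[OF finite_subset[OF bJs] bJs] by simp
  with cbJ have cg: "card {..<6::nat} \<le> card good" by simp
  obtain f where f: "f ` {..<6} \<subseteq> good" "inj_on f {..<6::nat}"
    using card_le_inj[OF _ _ cg] unfolding good_def by auto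
  define Xj where "Xj j \<longleftrightarrow> ({Inner i j C, Inner i j D} \<notin> EH \<or> {Inner i j D, Inner i j E} \<notin> EH
       \<or> {Inner i j E, Inner i j F} \<notin> EH \<or> {Inner i j F, Inner i j G} \<notin> EH)" for j
  define L where "L v = (case v of Inner i' j x \<Rightarrow>
      if i' = i \<and> j \<in> f ` {..<6} then gl (Xj j) (fst (pl ! inv_into {..<6} f j)) (snd (pl ! inv_into {..<6} f j)) x
      else {1,2,3} | _ \<Rightarrow> {1,2,3})" for v
  have Lok: "\<forall>v\<in>G1_V. finite (L v) \<and> card (L v) = 3"
  proof
    fix v show "finite (L v) \<and> card (L v) = 3"
    proof (cases v)
      case (Inner i' j x)
      show ?thesis
      proof (cases "i' = i \<and> j \<in> f ` {..<6}")
        case True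
        then have "inv_into {..<6} f j \<in> {..<6}" by (intro inv_into_into) auto
        then show ?thesis using pl_ok gl_card gl_fin Inner True by (simp add: L_def)
      next
        case False then show ?thesis by (auto simp add: L_def Inner)
      qed
    qed (simp_all add: L_def)
  qed
  show ?thesis
    unfolding choosable_def
  proof
    assume "\<forall>L :: gv \<Rightarrow> nat set. (\<forall>v\<in>G1_V. finite (L v) \<and> card (L v) = 3) \<longrightarrow>
        (\<exists>col. (\<forall>v\<in>G1_V. col v \<in> L v) \<and> (\<forall>u v. {u, v} \<in> G1_E - EH \<and> u \<noteq> v \<longrightarrow> col u \<noteq> col v))"
    then obtain col where col: "\<forall>v\<in>G1_V. col v \<in> L v"
      and pr: "\<forall>u v. {u, v} \<in> G1_E - EH \<and> u \<noteq> v \<longrightarrow> col u \<noteq> col v"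
      using Lok by blast
    have CenV: "Cen \<in> G1_V" and LeafV: "Leaf i \<in> G1_V" using i by (auto simp: G1_V_def)
    have a3: "col Cen \<in> {1,2,3}" using col CenV by (auto simp: L_def)
    have b3: "col (Leaf i) \<in> {1,2,3}" using col LeafV by (auto simp: L_def)
    have "{Cen, Leaf i} \<in> G1_E" using i by (auto simp: G1_E_def)
    then have abd: "col Cen \<noteq> col (Leaf i)" using pr nAB by auto
    obtain k where k: "k < 6" "pl ! k = (col Cen, col (Leaf i))"
      using pl_cover[OF abd a3 b3] by auto
    define j where "j = f k"
    have jg: "j \<in> good" using f k j_def by auto
    then have j9: "j < 9" and nB: "\<And>x. {Leaf i, Inner i j x} \<notin> EH" "\<And>x. {Inner i j x, Leaf i} \<notin> EH"
      unfolding good_def badJ_def PJ_def by (auto simp: insert_commute)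
    have jim: "j \<in> f ` {..<6}" using k j_def by auto
    have inv: "inv_into {..<6} f j = k" using inv_into_f_f[OF f(2)] k j_def by auto
    have h1: "col (emb i j A) \<noteq> col (emb i j B)" using abd by simp
    have h2: "col (emb i j A) \<in> {1,2,3}" "col (emb i j B) \<in> {1,2,3}" using a3 b3 by simp_all
    have h3: "Xj j = (\<not> {Inner i j C, Inner i j D} \<in> EH \<or> \<not> {Inner i j D, Inner i j E} \<in> EH
       \<or> \<not> {Inner i j E, Inner i j F} \<in> EH \<or> \<not> {Inner i j F, Inner i j G} \<in> EH)"
      by (simp add: Xj_def)
    have h4: "\<forall>x. x \<noteq> A \<and> x \<noteq> B \<longrightarrow> col (emb i j x) \<in> gl (Xj j) (col (emb i j A)) (col (emb i j B)) x"
    proof (intro allI impI)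
      fix x assume x: "x \<noteq> A \<and> x \<noteq> B"
      then have ex: "emb i j x = Inner i j x" by (cases x) auto
      have "Inner i j x \<in> G1_V" using i j9 x by (auto simp: G1_V_def)
      then have "col (Inner i j x) \<in> L (Inner i j x)" using col by blast
      then show "col (emb i j x) \<in> gl (Xj j) (col (emb i j A)) (col (emb i j B)) x"
        using ex jim inv k by (simp add: L_def)
    qed
    have notH: "{emb i j x, emb i j y} \<notin> EH"
      if "(x,y) \<in> set J3_edges" "x = A \<or> x = B \<or> y = A \<or> y = B \<or> {Inner i j x, Inner i j y} \<notin> EH" for x y
      using that nA nB nAB by (auto simp: J3_edges_def)
    have h5': "col (emb i j x) \<noteq> col (emb i j y)"
      if xy: "(x,y) \<in> set J3_edges"
        and c: "x = A \<or> x = B \<or> y = A \<or> y = B \<or> {Inner i j x, Inner i j y} \<notin> EH" for x y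
    proof -
      have "{emb i j x, emb i j y} \<in> G1_E" unfolding G1_E_def using i j9 xy by blast
      moreover have "emb i j x \<noteq> emb i j y" using emb_inj J3_ne[OF xy] by blast
      ultimately show ?thesis using pr notH[OF xy c] by blast
    qed
    have h5: "\<forall>(x,y)\<in>set J3_edges. x = A \<or> x = B \<or> y = A \<or> y = B \<or> \<not> {Inner i j x, Inner i j y} \<in> EH
         \<longrightarrow> col (emb i j x) \<noteq> col (emb i j y)"
      using h5' by blast
    let ?v = "Inner i j"
    have d1: "\<not>({?v C, ?v D} \<in> EH \<and> {?v D, ?v E} \<in> EH \<and> {?v H, ?v D} \<in> EH \<and> {?v J, ?v D} \<in> EH)"
      using deg4[OF sub md, of "{?v C, ?v D}" "{?v D, ?v E}" "{?v H, ?v D}" "{?v J, ?v D}" "?v D"]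
      by (auto simp: doubleton_eq_iff)
    have d2: "\<not>({?v E, ?v F} \<in> EH \<and> {?v F, ?v G} \<in> EH \<and> {?v I, ?v F} \<in> EH \<and> {?v K, ?v F} \<in> EH)"
      using deg4[OF sub md, of "{?v E, ?v F}" "{?v F, ?v G}" "{?v I, ?v F}" "{?v K, ?v F}" "?v F"]
      by (auto simp: doubleton_eq_iff)
    have d3: "\<not>({?v D, ?v E} \<in> EH \<and> {?v E, ?v F} \<in> EH \<and> {?v p, ?v E} \<in> EH \<and> {?v q, ?v E} \<in> EH)"
      if "p \<in> {H,I,J,K}" "q \<in> {H,I,J,K}" "p \<noteq> q" for p q
      using deg4[OF sub md, of "{?v D, ?v E}" "{?v E, ?v F}" "{?v p, ?v E}" "{?v q, ?v E}" "?v E"] that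
      by (auto simp: doubleton_eq_iff)
    show False
      by (rule gadget[where col="\<lambda>x. col (emb i j x)" and rm="\<lambda>x y. {Inner i j x, Inner i j y} \<in> EH" and X="Xj j",
            OF h1 h2 h3 h4 h5 d1 d2 d3 d3 d3 d3 d3 d3]) auto
  qed
qed

end
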